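(* Let $\mathcal C$ be a finite set (a codebook) and let $P(\cdot\mid\cdot)$ be the transition kernel of an ergodic (irreducible and aperiodic) Markov chain on $\mathcal C$ with stationary distribution $\pi$. For each $m\in\mathbb N$ let $\boldsymbol X=\{X_{ij}\}_{1\le i,j\le m}$ be a random $m\times m$ array with entries in $\mathcal C$ generated according to either of the following two scenarios: (Scenario 1) the $m$ columns $(X_{1j},X_{2j},\dots,X_{mj})$, $j=1,\dots,m$, are mutually independent, and each is a Markov chain read from top to bottom with initial distribution $\pi$ and transition kernel $P$; (Scenario 2) the $m$ rows $(X_{i1},X_{i2},\dots,X_{im})$, $i=1,\dots,m$, are mutually independent, and each is a Markov chain read from left to right with initial distribution $\pi$ and transition kernel $P$. Let $\operatorname{flat}(\boldsymbol X)=(X_{11},\dots,X_{1m},X_{21},\dots,X_{2m},\dots,X_{m1},\dots,X_{mm})$ be the row-major flattening, and for a probability model $Q$ on finite sequences over $\mathcal C$ set $\mathcal L_m(Q)=-\frac{1}{m^2}\mathbb E[\log Q(\operatorname{flat}(\boldsymbol X))]$. Then $$\liminf_{m\to\infty}\ \min_{Q\in\mathcal Q_{\text{1-gram}}}\mathcal L_m(Q)\ \ge\ H(\pi)=-\sum_{a\in\mathcal C}\pi(a)\log\pi(a),$$ while, with the minimum taken over all probability distributions $Q$ on finite sequences over $\mathcal C$, $$\lim_{m\to\infty}\ \min_{Q}\mathcal L_m(Q)\ =\ H_\infty:=-\sum_{a\in\mathcal C}\sum_{a'\in\mathcal C}\pi(a)P(a'\mid a)\log P(a'\mid a).$$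
   Context: A unigram model $Q\in\mathcal Q_{\text{1-gram}}$ over a token set $\mathcal T$ is specified by a probability distribution $Q_\#$ on $\mathbb N$ and a probability distribution $Q_{\text{tok}}$ on $\mathcal T$, and assigns to a finite token sequence $\mathbf t=(t_1,\dots,t_{|\mathbf t|})$ the probability $Q(\mathbf t)=Q_\#(|\mathbf t|)\prod_{r=1}^{|\mathbf t|}Q_{\text{tok}}(t_r)$. Here the tokens are the elements of $\mathcal C$. Logarithms are natural; $H(p)=-\sum_{y\in\operatorname{supp}(p)}p(y)\log p(y)$ is the Shannon entropy. *)

theory Defs
  imports "HOL-Probability.Probability"
begin

text \<open>Codebook = a finite type 'a. Transition kernel P a b = P(b | a).\<close>

definition stochastic :: "('a::finite \<Rightarrow> 'a \<Rightarrow> real) \<Rightarrow> bool" where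
  "stochastic P \<longleftrightarrow> (\<forall>a b. P a b \<ge> 0) \<and> (\<forall>a. (\<Sum>b\<in>UNIV. P a b) = 1)"

fun nstep :: "('a::finite \<Rightarrow> 'a \<Rightarrow> real) \<Rightarrow> nat \<Rightarrow> 'a \<Rightarrow> 'a \<Rightarrow> real" where
  "nstep P 0 a b = (if a = b then 1 else 0)"
| "nstep P (Suc n) a b = (\<Sum>c\<in>UNIV. nstep P n a c * P c b)"

definition irreducible_chain :: "('a::finite \<Rightarrow> 'a \<Rightarrow> real) \<Rightarrow> bool" where
  "irreducible_chain P \<longleftrightarrow> (\<forall>a b. \<exists>n>0. nstep P n a b > 0)"

definition aperiodic_chain :: "('a::finite \<Rightarrow> 'a \<Rightarrow> real) \<Rightarrow> bool" where
  "aperiodic_chain P \<longleftrightarrow> (\<forall>a. Gcd {n. n > 0 \<and> nstep P n a a > 0} = 1)"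

definition ergodic_chain :: "('a::finite \<Rightarrow> 'a \<Rightarrow> real) \<Rightarrow> bool" where
  "ergodic_chain P \<longleftrightarrow> stochastic P \<and> irreducible_chain P \<and> aperiodic_chain P"

definition stationary :: "('a::finite \<Rightarrow> 'a \<Rightarrow> real) \<Rightarrow> ('a \<Rightarrow> real) \<Rightarrow> bool" where
  "stationary P \<pi> \<longleftrightarrow> (\<forall>a. \<pi> a \<ge> 0) \<and> (\<Sum>a\<in>UNIV. \<pi> a) = 1 \<and>
     (\<forall>b. (\<Sum>a\<in>UNIV. \<pi> a * P a b) = \<pi> b)"

text \<open>Law of the row-major flattening of the m x m array X, as a function on lists of
  length m^2; entry X_{ij} (0-based) is xs ! (i*m + j).\<close>
definition scen1_prob :: "('a::finite \<Rightarrow> real) \<Rightarrow> ('a \<Rightarrow> 'a \<Rightarrow> real) \<Rightarrow> nat \<Rightarrow> 'a list \<Rightarrow> real" where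
  "scen1_prob \<pi> P m xs =
     (if length xs = m^2 then
        (\<Prod>j<m. \<pi> (xs ! j) * (\<Prod>i<m - 1. P (xs ! (i*m + j)) (xs ! ((i+1)*m + j))))
      else 0)"

definition scen2_prob :: "('a::finite \<Rightarrow> real) \<Rightarrow> ('a \<Rightarrow> 'a \<Rightarrow> real) \<Rightarrow> nat \<Rightarrow> 'a list \<Rightarrow> real" where
  "scen2_prob \<pi> P m xs =
     (if length xs = m^2 then
        (\<Prod>i<m. \<pi> (xs ! (i*m)) * (\<Prod>j<m - 1. P (xs ! (i*m + j)) (xs ! (i*m + j + 1))))
      else 0)"

text \<open>L_m(Q) = -(1/m^2) E[log Q(flat X)], with value +infinity when Q(flat X) = 0
  with positive probability (expectation of log is -infinity then).\<close>
definition Lm :: "(nat \<Rightarrow> 'a::finite list \<Rightarrow> real) \<Rightarrow> nat \<Rightarrow> 'a list pmf \<Rightarrow> ereal" where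
  "Lm p m Q =
     (if \<exists>xs. length xs = m^2 \<and> p m xs > 0 \<and> pmf Q xs = 0 then \<infinity>
      else ereal (- (1 / real (m^2)) * (\<Sum>xs\<in>{xs. length xs = m^2}. p m xs * ln (pmf Q xs))))"

definition unigram_models :: "'a list pmf set" where
  "unigram_models = {Q. \<exists>(Qn::nat pmf) (Qt::'a pmf).
       \<forall>t. pmf Q t = pmf Qn (length t) * (\<Prod>r<length t. pmf Qt (t ! r))}"

definition entropy_fn :: "('a::finite \<Rightarrow> real) \<Rightarrow> real" where
  "entropy_fn \<pi> = - (\<Sum>a\<in>{a. \<pi> a \<noteq> 0}. \<pi> a * ln (\<pi> a))"

definition entropy_rate :: "('a::finite \<Rightarrow> real) \<Rightarrow> ('a \<Rightarrow> 'a \<Rightarrow> real) \<Rightarrow> real" where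
  "entropy_rate \<pi> P = - (\<Sum>a\<in>UNIV. \<Sum>a'\<in>{a'. P a a' \<noteq> 0}. \<pi> a * P a a' * ln (P a a'))"

end

theory Submission
  imports Defs
begin

definition LL :: "nat \<Rightarrow> 'a list set" where "LL n = {xs. length xs = n}"

lemma finite_LL: "finite (LL n :: 'a::finite list set)"
proof -
  have "LL n = {xs::'a list. set xs \<subseteq> UNIV \<and> length xs = n}" by (auto simp: LL_def)
  then show ?thesis using finite_lists_length_eq[of "UNIV::'a set" n] by simp
qed

lemma LL_0: "LL 0 = {[]}" by (auto simp: LL_def)

lemma sum_LL_Suc:
  fixes F :: "'a::finite list \<Rightarrow> real"
  shows "(\<Sum>xs\<in>LL (Suc n). F xs) = (\<Sum>ys\<in>LL n. \<Sum>b\<in>UNIV. F (ys @ [b]))"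
proof -
  have inj: "inj_on (\<lambda>(ys, b). ys @ [b]) (LL n \<times> (UNIV::'a set))"
    by (auto simp: inj_on_def)
  have img: "(\<lambda>(ys, b). ys @ [b]) ` (LL n \<times> (UNIV::'a set)) = LL (Suc n)"
  proof
    show "(\<lambda>(ys, b). ys @ [b]) ` (LL n \<times> UNIV) \<subseteq> LL (Suc n)" by (auto simp: LL_def)
  next
    show "LL (Suc n) \<subseteq> (\<lambda>(ys, b). ys @ [b]) ` (LL n \<times> (UNIV::'a set))"
    proof
      fix xs :: "'a list" assume "xs \<in> LL (Suc n)"
      then have "xs \<noteq> []" "length (butlast xs) = n" by (auto simp: LL_def)
      then have "xs = (\<lambda>(ys, b). ys @ [b]) (butlast xs, last xs)" "(butlast xs, last xs) \<in> LL n \<times> UNIV"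
        by (auto simp: LL_def)
      then show "xs \<in> (\<lambda>(ys, b). ys @ [b]) ` (LL n \<times> UNIV)" by blast
    qed
  qed
  have "(\<Sum>ys\<in>LL n. \<Sum>b\<in>UNIV. F (ys @ [b])) = (\<Sum>z\<in>LL n \<times> (UNIV::'a set). F ((\<lambda>(ys, b). ys @ [b]) z))"
    by (subst sum.cartesian_product) (simp add: case_prod_unfold)
  also have "\<dots> = (\<Sum>xs\<in>LL (Suc n). F xs)"
    using sum.reindex[OF inj, of F] img by simp
  finally show ?thesis by simp
qed

definition seqp :: "(nat \<Rightarrow> 'a list \<Rightarrow> 'a \<Rightarrow> real) \<Rightarrow> nat \<Rightarrow> 'a list \<Rightarrow> real" where
  "seqp k n xs = (\<Prod>r<n. k r (take r xs) (xs ! r))"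

lemma seqp_snoc:
  assumes "length ys = n"
  shows "seqp k (Suc n) (ys @ [b]) = seqp k n ys * k n ys b"
proof -
  have "(\<Prod>r<n. k r (take r (ys @ [b])) ((ys @ [b]) ! r)) = (\<Prod>r<n. k r (take r ys) (ys ! r))"
    using assms by (intro prod.cong) (auto simp: nth_append)
  then show ?thesis using assms by (simp add: seqp_def nth_append)
qed

lemma seqp_tower:
  fixes k :: "nat \<Rightarrow> 'a::finite list \<Rightarrow> 'a \<Rightarrow> real"
  assumes sum1: "\<And>r ys. length ys = r \<Longrightarrow> (\<Sum>b\<in>UNIV. k r ys b) = 1"
  shows "n \<le> N \<Longrightarrow> (\<Sum>xs\<in>LL N. seqp k N xs * G (take n xs)) = (\<Sum>ys\<in>LL n. seqp k n ys * G ys)"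
proof (induction N)
  case 0
  then show ?case by (simp add: LL_0)
next
  case (Suc N)
  show ?case
  proof (cases "n = Suc N")
    case True
    then show ?thesis by (intro sum.cong) (auto simp: LL_def)
  next
    case False
    then have nN: "n \<le> N" using Suc.prems by simp
    have "(\<Sum>xs\<in>LL (Suc N). seqp k (Suc N) xs * G (take n xs))
        = (\<Sum>ys\<in>LL N. \<Sum>b\<in>UNIV. seqp k N ys * k N ys b * G (take n ys))"
      by (subst sum_LL_Suc, intro sum.cong refl) (use nN in \<open>auto simp: LL_def seqp_snoc\<close>)
    also have "\<dots> = (\<Sum>ys\<in>LL N. seqp k N ys * G (take n ys) * (\<Sum>b\<in>UNIV. k N ys b))"
      by (intro sum.cong refl) (simp add: sum_distrib_left algebra_simps)
    also have "\<dots> = (\<Sum>ys\<in>LL N. seqp k N ys * G (take n ys))"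
      by (intro sum.cong refl) (simp add: sum1 LL_def)
    finally show ?thesis using Suc.IH nN by simp
  qed
qed

lemma seqp_sum1:
  fixes k :: "nat \<Rightarrow> 'a::finite list \<Rightarrow> 'a \<Rightarrow> real"
  assumes sum1: "\<And>r ys. length ys = r \<Longrightarrow> (\<Sum>b\<in>UNIV. k r ys b) = 1"
  shows "(\<Sum>xs\<in>LL N. seqp k N xs) = 1"
  using seqp_tower[where k=k, OF sum1, where n=0 and N=N and G="\<lambda>_. 1"] by (simp add: LL_0 seqp_def)

lemma seqp_nonneg:
  assumes "\<And>r ys b. k r ys b \<ge> 0" shows "seqp k n xs \<ge> 0"
  unfolding seqp_def by (intro prod_nonneg) (simp add: assms)

definition good :: "('a \<Rightarrow> real) \<Rightarrow> ('a \<Rightarrow> 'a \<Rightarrow> real) \<Rightarrow> (nat \<Rightarrow> 'a list \<Rightarrow> 'a \<Rightarrow> real) \<Rightarrow> nat \<Rightarrow> bool" where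
  "good \<pi> P k r \<longleftrightarrow> (\<forall>ys b. length ys = r \<longrightarrow> k r ys b = \<pi> b) \<or>
      (\<exists>s<r. \<forall>ys b. length ys = r \<longrightarrow> k r ys b = P (ys ! s) b)"

lemma seqp_step:
  fixes k :: "nat \<Rightarrow> 'a::finite list \<Rightarrow> 'a \<Rightarrow> real"
  assumes sum1: "\<And>r ys. length ys = r \<Longrightarrow> (\<Sum>b\<in>UNIV. k r ys b) = 1"
    and "r < N"
  shows "(\<Sum>xs\<in>LL N. seqp k N xs * G (take r xs) (xs ! r)) =
         (\<Sum>ys\<in>LL r. seqp k r ys * (\<Sum>b\<in>UNIV. k r ys b * G ys b))"
proof -
  have "(\<Sum>xs\<in>LL N. seqp k N xs * G (take r xs) (xs ! r)) =
        (\<Sum>xs\<in>LL N. seqp k N xs * (\<lambda>zs. G (take r zs) (zs ! r)) (take (Suc r) xs))"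
    using assms(2) by (intro sum.cong refl) (auto simp: LL_def)
  also have "\<dots> = (\<Sum>zs\<in>LL (Suc r). seqp k (Suc r) zs * G (take r zs) (zs ! r))"
    using seqp_tower[where k=k, OF sum1, where n="Suc r" and N=N and G="\<lambda>zs. G (take r zs) (zs ! r)"] assms(2) by simp
  also have "\<dots> = (\<Sum>ys\<in>LL r. seqp k r ys * (\<Sum>b\<in>UNIV. k r ys b * G ys b))"
    by (subst sum_LL_Suc, intro sum.cong refl)
       (auto simp: LL_def seqp_snoc nth_append sum_distrib_left algebra_simps)
  finally show ?thesis .
qed

lemma seqp_marginal:
  fixes k :: "nat \<Rightarrow> 'a::finite list \<Rightarrow> 'a \<Rightarrow> real"
  assumes sum1: "\<And>r ys. length ys = r \<Longrightarrow> (\<Sum>b\<in>UNIV. k r ys b) = 1"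
    and gd: "\<And>r. good \<pi> P k r"
    and st: "stationary P \<pi>"
  shows "r < N \<Longrightarrow> (\<Sum>xs\<in>LL N. seqp k N xs * g (xs ! r)) = (\<Sum>a\<in>UNIV. \<pi> a * g a)"
proof (induction r arbitrary: N g rule: less_induct)
  case (less r)
  have "(\<Sum>xs\<in>LL N. seqp k N xs * g (xs ! r)) =
         (\<Sum>ys\<in>LL r. seqp k r ys * (\<Sum>b\<in>UNIV. k r ys b * g b))"
    using seqp_step[where k=k, OF sum1 less.prems, of "\<lambda>_ b. g b"] by simp
  also have "\<dots> = (\<Sum>a\<in>UNIV. \<pi> a * g a)"
    using gd[of r] unfolding good_def
  proof (elim disjE exE conjE)
    assume h: "\<forall>ys b. length ys = r \<longrightarrow> k r ys b = \<pi> b"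
    have "(\<Sum>ys\<in>LL r. seqp k r ys * (\<Sum>b\<in>UNIV. k r ys b * g b))
        = (\<Sum>ys\<in>LL r. seqp k r ys * (\<Sum>b\<in>UNIV. \<pi> b * g b))"
      using h by (intro sum.cong refl) (auto simp: LL_def)
    also have "\<dots> = (\<Sum>b\<in>UNIV. \<pi> b * g b)"
      by (simp add: sum_distrib_right[symmetric] seqp_sum1[where k=k, OF sum1])
    finally show ?thesis .
  next
    fix s assume s: "s < r" and h: "\<forall>ys b. length ys = r \<longrightarrow> k r ys b = P (ys ! s) b"
    have "(\<Sum>ys\<in>LL r. seqp k r ys * (\<Sum>b\<in>UNIV. k r ys b * g b))
        = (\<Sum>ys\<in>LL r. seqp k r ys * (\<lambda>a. \<Sum>b\<in>UNIV. P a b * g b) (ys ! s))"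
      using h by (intro sum.cong refl) (auto simp: LL_def)
    also have "\<dots> = (\<Sum>a\<in>UNIV. \<pi> a * (\<Sum>b\<in>UNIV. P a b * g b))"
      using less.IH[OF s s] .
    also have "\<dots> = (\<Sum>b\<in>UNIV. (\<Sum>a\<in>UNIV. \<pi> a * P a b) * g b)"
      unfolding sum_distrib_left sum_distrib_right by (subst sum.swap) (simp add: mult.assoc)
    also have "\<dots> = (\<Sum>b\<in>UNIV. \<pi> b * g b)"
      using st by (simp add: stationary_def)
    finally show ?thesis .
  qed
  finally show ?case .
qed


lemma seqp_entropy:
  fixes k :: "nat \<Rightarrow> 'a::finite list \<Rightarrow> 'a \<Rightarrow> real"
  assumes knn: "\<And>r ys b. 0 \<le> k r ys b"
    and sum1: "\<And>r ys. length ys = r \<Longrightarrow> (\<Sum>b\<in>UNIV. k r ys b) = 1"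
    and hp: "\<And>r ys b. isp r \<Longrightarrow> length ys = r \<Longrightarrow> k r ys b = \<pi> b"
    and hq: "\<And>r. \<not> isp r \<Longrightarrow> \<exists>s<r. \<forall>ys b. length ys = r \<longrightarrow> k r ys b = P (ys ! s) b"
    and st: "stationary P \<pi>"
  shows "(\<Sum>xs\<in>LL N. seqp k N xs * ln (seqp k N xs)) =
    (\<Sum>r<N. if isp r then (\<Sum>a\<in>UNIV. \<pi> a * ln (\<pi> a))
            else (\<Sum>a\<in>UNIV. \<pi> a * (\<Sum>b\<in>UNIV. P a b * ln (P a b))))"
proof -
  have gd: "\<And>r. good \<pi> P k r"
    unfolding good_def using hp hq by blast
  have eq: "seqp k N xs * ln (seqp k N xs) = seqp k N xs * (\<Sum>r<N. ln (k r (take r xs) (xs ! r)))" for xs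
  proof (cases "seqp k N xs = 0")
    case True then show ?thesis by simp
  next
    case False
    then have "\<And>r. r \<in> {..<N} \<Longrightarrow> k r (take r xs) (xs ! r) \<noteq> 0"
      unfolding seqp_def by auto
    then show ?thesis unfolding seqp_def by (subst ln_prod) auto
  qed
  have "(\<Sum>xs\<in>LL N. seqp k N xs * ln (seqp k N xs)) =
        (\<Sum>r<N. \<Sum>xs\<in>LL N. seqp k N xs * ln (k r (take r xs) (xs ! r)))"
    unfolding eq sum_distrib_left by (rule sum.swap)
  also have "\<dots> = (\<Sum>r<N. if isp r then (\<Sum>a\<in>UNIV. \<pi> a * ln (\<pi> a))
            else (\<Sum>a\<in>UNIV. \<pi> a * (\<Sum>b\<in>UNIV. P a b * ln (P a b))))"
  proof (rule sum.cong[OF refl])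
    fix r assume r: "r \<in> {..<N}"
    have "(\<Sum>xs\<in>LL N. seqp k N xs * ln (k r (take r xs) (xs ! r))) =
          (\<Sum>ys\<in>LL r. seqp k r ys * (\<Sum>b\<in>UNIV. k r ys b * ln (k r ys b)))"
      using seqp_step[where k=k, OF sum1, where G="\<lambda>ys b. ln (k r ys b)"] r by simp
    also have "\<dots> = (if isp r then (\<Sum>a\<in>UNIV. \<pi> a * ln (\<pi> a))
            else (\<Sum>a\<in>UNIV. \<pi> a * (\<Sum>b\<in>UNIV. P a b * ln (P a b))))"
    proof (cases "isp r")
      case True
      have "(\<Sum>ys\<in>LL r. seqp k r ys * (\<Sum>b\<in>UNIV. k r ys b * ln (k r ys b)))
          = (\<Sum>ys\<in>LL r. seqp k r ys * (\<Sum>b\<in>UNIV. \<pi> b * ln (\<pi> b)))"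
        using hp[OF True] by (intro sum.cong refl) (auto simp: LL_def)
      also have "\<dots> = (\<Sum>b\<in>UNIV. \<pi> b * ln (\<pi> b))"
        by (simp add: sum_distrib_right[symmetric] seqp_sum1[where k=k, OF sum1])
      finally show ?thesis using True by simp
    next
      case False
      obtain s where s: "s < r" and h: "\<forall>ys b. length ys = r \<longrightarrow> k r ys b = P (ys ! s) b"
        using hq[OF False] by blast
      have "(\<Sum>ys\<in>LL r. seqp k r ys * (\<Sum>b\<in>UNIV. k r ys b * ln (k r ys b)))
          = (\<Sum>ys\<in>LL r. seqp k r ys * (\<lambda>a. \<Sum>b\<in>UNIV. P a b * ln (P a b)) (ys ! s))"
        using h by (intro sum.cong refl) (auto simp: LL_def)
      also have "\<dots> = (\<Sum>a\<in>UNIV. \<pi> a * (\<Sum>b\<in>UNIV. P a b * ln (P a b)))"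
        by (rule seqp_marginal[where k=k, OF sum1 gd st s])
      finally show ?thesis using False by simp
    qed
    finally show "(\<Sum>xs\<in>LL N. seqp k N xs * ln (k r (take r xs) (xs ! r))) = (if isp r then (\<Sum>a\<in>UNIV. \<pi> a * ln (\<pi> a))
            else (\<Sum>a\<in>UNIV. \<pi> a * (\<Sum>b\<in>UNIV. P a b * ln (P a b))))" .
  qed
  finally show ?thesis .
qed

lemma gibbs:
  fixes p q :: "'b \<Rightarrow> real"
  assumes "finite S" "\<And>x. x \<in> S \<Longrightarrow> 0 \<le> p x" "\<And>x. x \<in> S \<Longrightarrow> 0 \<le> q x"
    "sum p S = 1" "sum q S \<le> 1" "\<And>x. x \<in> S \<Longrightarrow> 0 < p x \<Longrightarrow> 0 < q x"
  shows "(\<Sum>x\<in>S. p x * ln (q x)) \<le> (\<Sum>x\<in>S. p x * ln (p x))"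
proof -
  have "\<And>x. x \<in> S \<Longrightarrow> p x * ln (q x) - p x * ln (p x) \<le> q x - p x"
  proof -
    fix x assume x: "x \<in> S"
    show "p x * ln (q x) - p x * ln (p x) \<le> q x - p x"
    proof (cases "p x = 0")
      case True then show ?thesis using assms(3)[OF x] by simp
    next
      case False
      then have px: "0 < p x" using assms(2)[OF x] by simp
      then have qx: "0 < q x" using assms(6)[OF x] by simp
      have "ln (q x / p x) \<le> q x / p x - 1" using px qx by (intro ln_le_minus_one) simp
      then have "p x * ln (q x / p x) \<le> p x * (q x / p x - 1)"
        using px by (intro mult_left_mono) auto
      then show ?thesis using px qx by (simp add: ln_div algebra_simps)
    qed
  qed
  then have "(\<Sum>x\<in>S. p x * ln (q x) - p x * ln (p x)) \<le> (\<Sum>x\<in>S. q x - p x)"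
    by (rule sum_mono)
  then show ?thesis using assms(4,5) by (simp add: sum_subtractf)
qed

lemma prod_blocks:
  fixes f :: "nat \<Rightarrow> 'b::comm_monoid_mult"
  shows "(\<Prod>r<n*m. f r) = (\<Prod>i<n. \<Prod>j<m. f (i*m+j))"
proof (induction n)
  case 0 then show ?case by simp
next
  case (Suc n)
  have "{..<Suc n * m} = {..<n*m} \<union> {n*m..<n*m+m}" by auto
  then have "(\<Prod>r<Suc n*m. f r) = (\<Prod>r<n*m. f r) * (\<Prod>r\<in>{n*m..<n*m+m}. f r)"
    by (simp add: prod.union_disjoint ivl_disj_int)
  also have "(\<Prod>r\<in>{n*m..<n*m+m}. f r) = (\<Prod>j<m. f (n*m+j))"
    using prod.shift_bounds_nat_ivl[of f 0 "n*m" m] by (simp add: atLeast0LessThan add.commute)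
  finally show ?case using Suc by simp
qed

lemma sum_blocks:
  fixes f :: "nat \<Rightarrow> 'b::comm_monoid_add"
  shows "(\<Sum>r<n*m. f r) = (\<Sum>i<n. \<Sum>j<m. f (i*m+j))"
proof (induction n)
  case 0 then show ?case by simp
next
  case (Suc n)
  have "{..<Suc n * m} = {..<n*m} \<union> {n*m..<n*m+m}" by auto
  then have "(\<Sum>r<Suc n*m. f r) = (\<Sum>r<n*m. f r) + (\<Sum>r\<in>{n*m..<n*m+m}. f r)"
    by (simp add: sum.union_disjoint ivl_disj_int)
  also have "(\<Sum>r\<in>{n*m..<n*m+m}. f r) = (\<Sum>j<m. f (n*m+j))"
    using sum.shift_bounds_nat_ivl[of f 0 "n*m" m] by (simp add: atLeast0LessThan add.commute)
  finally show ?case using Suc by simp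
qed


lemma ln_le0: "0 \<le> (x::real) \<Longrightarrow> x \<le> 1 \<Longrightarrow> ln x \<le> 0"
  by (cases "x = 0") auto

lemma entropy_fn_alt: "entropy_fn \<pi> = - (\<Sum>a\<in>UNIV. \<pi> a * ln (\<pi> a))"
  unfolding entropy_fn_def by (subst sum.mono_neutral_left[of UNIV]) auto

lemma entropy_rate_alt: "entropy_rate \<pi> P = - (\<Sum>a\<in>UNIV. \<pi> a * (\<Sum>b\<in>UNIV. P a b * ln (P a b)))"
  unfolding entropy_rate_def
  by (intro arg_cong[where f=uminus] sum.cong refl, subst sum.mono_neutral_left[of UNIV])
     (auto simp: sum_distrib_left mult.assoc)

lemma main_m:
  fixes k :: "nat \<Rightarrow> 'a::finite list \<Rightarrow> 'a \<Rightarrow> real" and p :: "nat \<Rightarrow> 'a list \<Rightarrow> real"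
  assumes knn: "\<And>r ys b. 0 \<le> k r ys b"
    and sum1: "\<And>r ys. length ys = r \<Longrightarrow> (\<Sum>b\<in>UNIV. k r ys b) = 1"
    and hp: "\<And>r ys b. isp r \<Longrightarrow> length ys = r \<Longrightarrow> k r ys b = \<pi> b"
    and hq: "\<And>r. \<not> isp r \<Longrightarrow> \<exists>s<r. \<forall>ys b. length ys = r \<longrightarrow> k r ys b = P (ys ! s) b"
    and st: "stationary P \<pi>"
    and m: "1 \<le> m"
    and hpk: "\<And>xs. p m xs = (if length xs = m^2 then seqp k (m^2) xs else 0)"
  shows "(INF Q\<in>UNIV. Lm p m Q) = ereal (- (1 / real (m^2)) *
      (\<Sum>r<m^2. if isp r then (\<Sum>a\<in>UNIV. \<pi> a * ln (\<pi> a))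
            else (\<Sum>a\<in>UNIV. \<pi> a * (\<Sum>b\<in>UNIV. P a b * ln (P a b)))))"
    and "\<And>Q. Q \<in> unigram_models \<Longrightarrow> ereal (entropy_fn \<pi>) \<le> Lm p m Q"
proof -
  define N where "N = m^2"
  have N1: "1 \<le> N" using m by (simp add: N_def)
  have gd: "\<And>r. good \<pi> P k r"
    unfolding good_def using hp hq by blast
  have S: "{xs::'a list. length xs = m^2} = LL N" by (simp add: LL_def N_def)
  have pS: "\<And>xs. xs \<in> LL N \<Longrightarrow> p m xs = seqp k N xs" by (simp add: hpk LL_def N_def)
  have pnn: "\<And>xs. 0 \<le> p m xs" using seqp_nonneg[of k, OF knn] by (simp add: hpk)
  have p0: "\<And>xs. xs \<notin> LL N \<Longrightarrow> p m xs = 0" by (simp add: hpk LL_def N_def)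
  define Ent where "Ent = (\<Sum>xs\<in>LL N. seqp k N xs * ln (seqp k N xs))"
  have Ent: "Ent = (\<Sum>r<m^2. if isp r then (\<Sum>a\<in>UNIV. \<pi> a * ln (\<pi> a))
            else (\<Sum>a\<in>UNIV. \<pi> a * (\<Sum>b\<in>UNIV. P a b * ln (P a b))))"
    unfolding Ent_def N_def by (rule seqp_entropy[where k=k, OF knn sum1 hp hq st]) auto
  have ps1: "(\<Sum>xs\<in>LL N. p m xs) = 1"
    using seqp_sum1[where k=k, OF sum1, of N] by (simp add: pS)
  have Ninv: "0 < 1 / real N" using N1 by simp
  have lower: "ereal (- (1 / real N) * Ent) \<le> Lm p m Q" for Q
  proof (cases "\<exists>xs. length xs = m^2 \<and> p m xs > 0 \<and> pmf Q xs = 0")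
    case True then show ?thesis by (simp add: Lm_def)
  next
    case False
    then have Lm: "Lm p m Q = ereal (- (1 / real N) * (\<Sum>xs\<in>LL N. p m xs * ln (pmf Q xs)))"
      by (simp add: Lm_def S N_def)
    have "(\<Sum>xs\<in>LL N. p m xs * ln (pmf Q xs)) \<le> (\<Sum>xs\<in>LL N. p m xs * ln (p m xs))"
    proof (rule gibbs[OF finite_LL])
      show "sum (pmf Q) (LL N) \<le> 1"
        using measure_measure_pmf_finite[OF finite_LL, of Q N] measure_pmf.prob_le_1 by metis
      show "\<And>x. x \<in> LL N \<Longrightarrow> 0 < p m x \<Longrightarrow> 0 < pmf Q x"
        using False pmf_nonneg by (force simp: LL_def N_def less_le)
    qed (auto simp: pnn ps1)
    also have "\<dots> = Ent" unfolding Ent_def by (intro sum.cong refl) (simp add: pS)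
    finally have "(\<Sum>xs\<in>LL N. p m xs * ln (pmf Q xs)) \<le> Ent" .
    then have "- (1 / real N) * Ent \<le> - (1 / real N) * (\<Sum>xs\<in>LL N. p m xs * ln (pmf Q xs))"
      using Ninv by (intro mult_left_mono_neg) auto
    then show ?thesis unfolding Lm by simp
  qed
  have int1: "(\<integral>\<^sup>+x. ennreal (p m x) \<partial>count_space UNIV) = 1"
    by (subst nn_integral_count_space'[OF finite_LL, of _ N]) (auto simp: p0 pnn ps1)
  define Q0 where "Q0 = embed_pmf (p m)"
  have pQ0: "pmf Q0 xs = p m xs" for xs
    unfolding Q0_def by (rule pmf_embed_pmf[OF pnn int1])
  have "Lm p m Q0 = ereal (- (1 / real N) * Ent)"
  proof -
    have nz: "\<not> (\<exists>xs. length xs = m^2 \<and> p m xs > 0 \<and> pmf Q0 xs = 0)"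
      by (simp add: pQ0)
    have "(\<Sum>xs\<in>LL N. p m xs * ln (pmf Q0 xs)) = Ent"
      unfolding Ent_def pQ0 by (intro sum.cong refl) (simp add: pS)
    then show ?thesis using nz unfolding Lm_def S N_def by simp
  qed
  then have "(INF Q\<in>UNIV. Lm p m Q) = ereal (- (1 / real N) * Ent)"
    using lower by (intro antisym INF_greatest) (auto intro: INF_lower2[of Q0])
  then show "(INF Q\<in>UNIV. Lm p m Q) = ereal (- (1 / real (m^2)) *
      (\<Sum>r<m^2. if isp r then (\<Sum>a\<in>UNIV. \<pi> a * ln (\<pi> a))
            else (\<Sum>a\<in>UNIV. \<pi> a * (\<Sum>b\<in>UNIV. P a b * ln (P a b)))))"
    by (simp add: Ent N_def)
  fix Q :: "'a list pmf" assume "Q \<in> unigram_models"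
  then obtain Qn :: "nat pmf" and Qt :: "'a pmf" where
    hQ: "\<And>t::'a list. pmf Q t = pmf Qn (length t) * (\<Prod>r<length t. pmf Qt (t ! r))"
    unfolding unigram_models_def by blast
  show "ereal (entropy_fn \<pi>) \<le> Lm p m Q"
  proof (cases "\<exists>xs. length xs = m^2 \<and> p m xs > 0 \<and> pmf Q xs = 0")
    case True then show ?thesis by (simp add: Lm_def)
  next
    case False
    then have Lm: "Lm p m Q = ereal (- (1 / real N) * (\<Sum>xs\<in>LL N. p m xs * ln (pmf Q xs)))"
      by (simp add: Lm_def S N_def)
    have Qpos: "\<And>xs. xs \<in> LL N \<Longrightarrow> 0 < p m xs \<Longrightarrow> pmf Q xs \<noteq> 0"
      using False by (auto simp: LL_def N_def)
    have Qtpos: "0 < pmf Qt a" if pa: "0 < \<pi> a" for a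
    proof -
      have "(\<Sum>xs\<in>LL N. seqp k N xs * (\<lambda>x. if x = a then 1 else 0) (xs ! 0)) =
            (\<Sum>b\<in>UNIV. \<pi> b * (\<lambda>x. if x = a then 1 else 0) b)"
        using N1 by (intro seqp_marginal[where k=k, OF sum1 gd st]) auto
      also have "\<dots> = (\<Sum>b\<in>UNIV. if b = a then \<pi> b else 0)"
        by (intro sum.cong) auto
      also have "\<dots> = \<pi> a" by simp
      finally have "(\<Sum>xs\<in>LL N. seqp k N xs * (if xs ! 0 = a then 1 else 0)) \<noteq> 0"
        using pa by simp
      then obtain xs where xs: "xs \<in> LL N" "seqp k N xs * (if xs ! 0 = a then 1 else 0) \<noteq> 0"
        by (meson sum.neutral)
      then have "xs ! 0 = a" "0 < p m xs"
        using seqp_nonneg[of k, OF knn] by (auto simp: pS less_le split: if_splits)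
      then have "pmf Q xs \<noteq> 0" using Qpos xs(1) by blast
      then have "(\<Prod>r<length xs. pmf Qt (xs ! r)) \<noteq> 0" by (simp add: hQ)
      then have "pmf Qt (xs ! 0) \<noteq> 0" using xs(1) N1 by (auto simp: LL_def)
      then show ?thesis using \<open>xs ! 0 = a\<close> pmf_nonneg[of Qt a] by simp
    qed
    have G1: "(\<Sum>a\<in>UNIV. \<pi> a * ln (pmf Qt a)) \<le> (\<Sum>a\<in>UNIV. \<pi> a * ln (\<pi> a))"
    proof (rule gibbs)
      show "sum (pmf Qt) UNIV \<le> 1" by (simp add: sum_pmf_eq_1)
    qed (use st Qtpos in \<open>auto simp: stationary_def\<close>)
    have eq: "p m xs * ln (pmf Q xs) = p m xs * (ln (pmf Qn N) + (\<Sum>r<N. ln (pmf Qt (xs ! r))))"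
      if xs: "xs \<in> LL N" for xs
    proof (cases "p m xs = 0")
      case True then show ?thesis by simp
    next
      case False
      then have "0 < p m xs" using pnn less_le by metis
      then have nz: "pmf Q xs \<noteq> 0" using Qpos xs by blast
      have len: "length xs = N" using xs by (simp add: LL_def)
      have a: "pmf Qn N \<noteq> 0" and b: "\<And>r. r \<in> {..<N} \<Longrightarrow> pmf Qt (xs ! r) \<noteq> 0"
        using nz by (auto simp: hQ len)
      have "ln (pmf Q xs) = ln (pmf Qn N) + ln (\<Prod>r<N. pmf Qt (xs ! r))"
        unfolding hQ len using a b pmf_nonneg
        by (subst ln_mult) (auto simp: less_le prod_nonneg intro!: prod_pos)
      also have "ln (\<Prod>r<N. pmf Qt (xs ! r)) = (\<Sum>r<N. ln (pmf Qt (xs ! r)))"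
        using b by (subst ln_prod) auto
      finally show ?thesis by simp
    qed
    have "(\<Sum>xs\<in>LL N. p m xs * ln (pmf Q xs)) =
          ln (pmf Qn N) * (\<Sum>xs\<in>LL N. p m xs) + (\<Sum>r<N. \<Sum>xs\<in>LL N. seqp k N xs * ln (pmf Qt (xs ! r)))"
    proof -
      have "(\<Sum>xs\<in>LL N. p m xs * ln (pmf Q xs)) =
          (\<Sum>xs\<in>LL N. ln (pmf Qn N) * p m xs + (\<Sum>r<N. seqp k N xs * ln (pmf Qt (xs ! r))))"
        using eq by (intro sum.cong refl) (simp add: pS distrib_left sum_distrib_left mult.commute)
      also have "\<dots> = ln (pmf Qn N) * (\<Sum>xs\<in>LL N. p m xs) + (\<Sum>xs\<in>LL N. \<Sum>r<N. seqp k N xs * ln (pmf Qt (xs ! r)))"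
        by (simp add: sum.distrib sum_distrib_left)
      also have "(\<Sum>xs\<in>LL N. \<Sum>r<N. seqp k N xs * ln (pmf Qt (xs ! r))) = (\<Sum>r<N. \<Sum>xs\<in>LL N. seqp k N xs * ln (pmf Qt (xs ! r)))"
        by (rule sum.swap)
      finally show ?thesis .
    qed
    also have "(\<Sum>r<N. \<Sum>xs\<in>LL N. seqp k N xs * ln (pmf Qt (xs ! r))) =
               (\<Sum>r<N. \<Sum>a\<in>UNIV. \<pi> a * ln (pmf Qt a))"
      by (intro sum.cong refl seqp_marginal[where k=k, OF sum1 gd st]) auto
    also have "\<dots> = real N * (\<Sum>a\<in>UNIV. \<pi> a * ln (pmf Qt a))" by simp
    moreover have "real N * (\<Sum>a\<in>UNIV. \<pi> a * ln (pmf Qt a)) \<le> real N * (\<Sum>a\<in>UNIV. \<pi> a * ln (\<pi> a))"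
      using G1 by (intro mult_left_mono) auto
    ultimately have "(\<Sum>xs\<in>LL N. p m xs * ln (pmf Q xs)) \<le> real N * (\<Sum>a\<in>UNIV. \<pi> a * ln (\<pi> a))"
      using ln_le0[OF pmf_nonneg pmf_le_1, of Qn N] ps1 by simp
    then have "- (1 / real N) * (real N * (\<Sum>a\<in>UNIV. \<pi> a * ln (\<pi> a))) \<le>
              - (1 / real N) * (\<Sum>xs\<in>LL N. p m xs * ln (pmf Q xs))"
      using Ninv by (intro mult_left_mono_neg) auto
    then show ?thesis unfolding Lm entropy_fn_alt using N1 by simp
  qed
qed


definition k1 :: "('a \<Rightarrow> real) \<Rightarrow> ('a \<Rightarrow> 'a \<Rightarrow> real) \<Rightarrow> nat \<Rightarrow> nat \<Rightarrow> 'a list \<Rightarrow> 'a \<Rightarrow> real" where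
  "k1 \<pi> P m r ys b = (if r < m then \<pi> b else P (ys ! (r - m)) b)"

definition k2 :: "('a \<Rightarrow> real) \<Rightarrow> ('a \<Rightarrow> 'a \<Rightarrow> real) \<Rightarrow> nat \<Rightarrow> nat \<Rightarrow> 'a list \<Rightarrow> 'a \<Rightarrow> real" where
  "k2 \<pi> P m r ys b = (if r mod m = 0 then \<pi> b else P (ys ! (r - 1)) b)"

lemma k1_val:
  assumes "i < m" "j < m" "length xs = m * m"
  shows "k1 \<pi> P m (i*m+j) (take (i*m+j) xs) (xs ! (i*m+j)) =
         (if i = 0 then \<pi> (xs ! j) else P (xs ! ((i - 1)*m + j)) (xs ! (i*m+j)))"
proof (cases "i = 0")
  case True then show ?thesis using assms by (simp add: k1_def)
next
  case False
  then obtain i' where i: "i = Suc i'" by (cases i) auto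
  have "\<not> i*m+j < m" using i by simp
  moreover have "i*m+j - m = i'*m + j" using i by simp
  moreover have "i'*m + j < i*m+j" using i assms by simp
  ultimately show ?thesis using i by (simp add: k1_def)
qed

lemma k2_val:
  assumes "i < m" "j < m" "length xs = m * m"
  shows "k2 \<pi> P m (i*m+j) (take (i*m+j) xs) (xs ! (i*m+j)) =
         (if j = 0 then \<pi> (xs ! (i*m)) else P (xs ! (i*m + j - 1)) (xs ! (i*m+j)))"
  using assms by (auto simp: k2_def)

lemma scen1_seqp:
  assumes m: "m = Suc n"
  shows "scen1_prob \<pi> P m xs = (if length xs = m^2 then seqp (k1 \<pi> P m) (m^2) xs else 0)"
proof (cases "length xs = m^2")
  case False then show ?thesis by (simp add: scen1_prob_def)
next
  case True
  then have len: "length xs = m * m" by (simp add: power2_eq_square)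
  have "seqp (k1 \<pi> P m) (m^2) xs = (\<Prod>i<m. \<Prod>j<m. k1 \<pi> P m (i*m+j) (take (i*m+j) xs) (xs ! (i*m+j)))"
    unfolding seqp_def power2_eq_square by (rule prod_blocks)
  also have "\<dots> = (\<Prod>i<m. \<Prod>j<m. (if i = 0 then \<pi> (xs ! j) else P (xs ! ((i - 1)*m + j)) (xs ! (i*m+j))))"
    using len by (intro prod.cong refl) (simp add: k1_val)
  also have "\<dots> = (\<Prod>j<m. \<pi> (xs ! j)) * (\<Prod>i<n. \<Prod>j<m. P (xs ! (i*m + j)) (xs ! ((i+1)*m+j)))"
    unfolding m by (subst prod.lessThan_Suc_shift) simp
  also have "\<dots> = (\<Prod>j<m. \<pi> (xs ! j) * (\<Prod>i<m - 1. P (xs ! (i*m + j)) (xs ! ((i+1)*m+j))))"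
    by (subst prod.swap) (simp add: prod.distrib m)
  finally show ?thesis using True by (simp add: scen1_prob_def)
qed

lemma scen2_seqp:
  assumes m: "m = Suc n"
  shows "scen2_prob \<pi> P m xs = (if length xs = m^2 then seqp (k2 \<pi> P m) (m^2) xs else 0)"
proof (cases "length xs = m^2")
  case False then show ?thesis by (simp add: scen2_prob_def)
next
  case True
  then have len: "length xs = m * m" by (simp add: power2_eq_square)
  have "seqp (k2 \<pi> P m) (m^2) xs = (\<Prod>i<m. \<Prod>j<m. k2 \<pi> P m (i*m+j) (take (i*m+j) xs) (xs ! (i*m+j)))"
    unfolding seqp_def power2_eq_square by (rule prod_blocks)
  also have "\<dots> = (\<Prod>i<m. \<Prod>j<m. (if j = 0 then \<pi> (xs ! (i*m)) else P (xs ! (i*m + j - 1)) (xs ! (i*m+j))))"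
    using len by (intro prod.cong refl) (simp add: k2_val)
  also have "\<dots> = (\<Prod>i<m. \<pi> (xs ! (i*m)) * (\<Prod>j<m - 1. P (xs ! (i*m + j)) (xs ! (i*m + j + 1))))"
    unfolding m by (intro prod.cong refl, subst prod.lessThan_Suc_shift) simp
  finally show ?thesis using True by (simp add: scen2_prob_def)
qed

lemma sum_isp1:
  assumes m: "m = Suc n"
  shows "(\<Sum>r<m^2. if r < m then A else (B::real)) = real m * A + real m * real n * B"
proof -
  have "(\<Sum>r<m^2. if r < m then A else B) = (\<Sum>i<m. \<Sum>j<m. if i*m+j < m then A else B)"
    unfolding power2_eq_square by (rule sum_blocks)
  also have "\<dots> = (\<Sum>i<m. \<Sum>j<m. if i = 0 then A else B)"
  proof (intro sum.cong refl)
    fix i j assume "j \<in> {..<m}"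
    then have "(i*m+j < m) = (i = 0)" by (cases i) auto
    then show "(if i*m+j < m then A else B) = (if i = 0 then A else B)" by simp
  qed
  also have "\<dots> = real m * A + real m * real n * B"
    unfolding m by (subst sum.lessThan_Suc_shift) (simp add: algebra_simps)
  finally show ?thesis .
qed

lemma sum_isp2:
  assumes m: "m = Suc n"
  shows "(\<Sum>r<m^2. if r mod m = 0 then A else (B::real)) = real m * A + real m * real n * B"
proof -
  have "(\<Sum>r<m^2. if r mod m = 0 then A else B) = (\<Sum>i<m. \<Sum>j<m. if (i*m+j) mod m = 0 then A else B)"
    unfolding power2_eq_square by (rule sum_blocks)
  also have "\<dots> = (\<Sum>i<m. \<Sum>j<m. if j = 0 then A else B)"
  proof (intro sum.cong refl)
    fix i j assume "j \<in> {..<m}"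
    then have "(i*m+j) mod m = j" by simp
    then show "(if (i*m+j) mod m = 0 then A else B) = (if j = 0 then A else B)" by simp
  qed
  also have "\<dots> = (\<Sum>i<m. A + real n * B)"
    unfolding m by (intro sum.cong refl, subst sum.lessThan_Suc_shift) simp
  also have "\<dots> = real m * A + real m * real n * B"
    by (simp add: algebra_simps)
  finally show ?thesis .
qed

lemma scen_main:
  fixes P :: "'a::finite \<Rightarrow> 'a \<Rightarrow> real" and \<pi> :: "'a \<Rightarrow> real"
    and p :: "nat \<Rightarrow> 'a list \<Rightarrow> real"
  assumes sto: "stochastic P" and st: "stationary P \<pi>"
    and p: "p = scen1_prob \<pi> P \<or> p = scen2_prob \<pi> P"
    and m: "m = Suc n"
  shows "(INF Q\<in>UNIV. Lm p m Q) = ereal (- (1 / real (m^2)) *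
      (real m * (\<Sum>a\<in>UNIV. \<pi> a * ln (\<pi> a)) + real m * real n *
        (\<Sum>a\<in>UNIV. \<pi> a * (\<Sum>b\<in>UNIV. P a b * ln (P a b)))))"
    and "\<And>Q. Q \<in> unigram_models \<Longrightarrow> ereal (entropy_fn \<pi>) \<le> Lm p m Q"
proof -
  have Pnn: "\<And>a b. 0 \<le> P a b" and P1: "\<And>a. (\<Sum>b\<in>UNIV. P a b) = 1"
    using sto by (auto simp: stochastic_def)
  have pinn: "\<And>a. 0 \<le> \<pi> a" and pi1: "(\<Sum>a\<in>UNIV. \<pi> a) = 1"
    using st by (auto simp: stationary_def)
  have m1: "1 \<le> m" using m by simp
  define A where "A = (\<Sum>a\<in>UNIV. \<pi> a * ln (\<pi> a))"
  define B where "B = (\<Sum>a\<in>UNIV. \<pi> a * (\<Sum>b\<in>UNIV. P a b * ln (P a b)))"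
  have "(INF Q\<in>UNIV. Lm p m Q) = ereal (- (1 / real (m^2)) * (real m * A + real m * real n * B))
        \<and> (\<forall>Q\<in>unigram_models. ereal (entropy_fn \<pi>) \<le> Lm p m Q)"
    using p
  proof
    assume p1: "p = scen1_prob \<pi> P"
    have knn: "\<And>r ys b. 0 \<le> k1 \<pi> P m r ys b" by (simp add: k1_def Pnn pinn)
    have sum1: "\<And>r ys. length ys = r \<Longrightarrow> (\<Sum>b\<in>UNIV. k1 \<pi> P m r ys b) = 1"
    proof -
      fix r :: nat and ys :: "'a list"
      show "(\<Sum>b\<in>UNIV. k1 \<pi> P m r ys b) = 1"
        by (cases "r < m") (simp_all add: k1_def P1 pi1)
    qed
    have hp: "\<And>r ys b. r < m \<Longrightarrow> length ys = r \<Longrightarrow> k1 \<pi> P m r ys b = \<pi> b"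
      by (simp add: k1_def)
    have hq: "\<And>r. \<not> r < m \<Longrightarrow> \<exists>s<r. \<forall>ys b. length ys = r \<longrightarrow> k1 \<pi> P m r ys b = P (ys ! s) b"
      using m1 by (intro exI[of _ "r - m" for r]) (auto simp: k1_def)
    have hpk: "\<And>xs. p m xs = (if length xs = m^2 then seqp (k1 \<pi> P m) (m^2) xs else 0)"
      unfolding p1 by (rule scen1_seqp[OF m])
    note R = main_m[where k="k1 \<pi> P m" and isp="\<lambda>r. r < m" and \<pi>=\<pi> and P=P and m=m and p=p, OF knn sum1 hp hq st m1 hpk]
    have e: "(\<Sum>r<m^2. if r < m then A else B) = real m * A + real m * real n * B"
      by (rule sum_isp1[OF m])
    show ?thesis
    proof
      show "(INF Q\<in>UNIV. Lm p m Q) = ereal (- (1 / real (m^2)) * (real m * A + real m * real n * B))"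
        using R(1) e unfolding A_def B_def by (simp only:) blast
      show "\<forall>Q\<in>unigram_models. ereal (entropy_fn \<pi>) \<le> Lm p m Q" using R(2) by blast
    qed
  next
    assume p2: "p = scen2_prob \<pi> P"
    have knn: "\<And>r ys b. 0 \<le> k2 \<pi> P m r ys b" by (simp add: k2_def Pnn pinn)
    have sum1: "\<And>r ys. length ys = r \<Longrightarrow> (\<Sum>b\<in>UNIV. k2 \<pi> P m r ys b) = 1"
    proof -
      fix r :: nat and ys :: "'a list"
      show "(\<Sum>b\<in>UNIV. k2 \<pi> P m r ys b) = 1"
        by (cases "r mod m = 0") (simp_all add: k2_def P1 pi1)
    qed
    have hp: "\<And>r ys b. r mod m = 0 \<Longrightarrow> length ys = r \<Longrightarrow> k2 \<pi> P m r ys b = \<pi> b"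
      by (simp add: k2_def)
    have hq: "\<And>r. \<not> r mod m = 0 \<Longrightarrow> \<exists>s<r. \<forall>ys b. length ys = r \<longrightarrow> k2 \<pi> P m r ys b = P (ys ! s) b"
    proof -
      fix r assume "\<not> r mod m = 0"
      then have "r \<noteq> 0" by (cases r) auto
      then show "\<exists>s<r. \<forall>ys b. length ys = r \<longrightarrow> k2 \<pi> P m r ys b = P (ys ! s) b"
        using \<open>\<not> r mod m = 0\<close> by (intro exI[of _ "r - 1"]) (auto simp: k2_def)
    qed
    have hpk: "\<And>xs. p m xs = (if length xs = m^2 then seqp (k2 \<pi> P m) (m^2) xs else 0)"
      unfolding p2 by (rule scen2_seqp[OF m])
    note R = main_m[where k="k2 \<pi> P m" and isp="\<lambda>r. r mod m = 0" and \<pi>=\<pi> and P=P and m=m and p=p, OF knn sum1 hp hq st m1 hpk]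
    have e: "(\<Sum>r<m^2. if r mod m = 0 then A else B) = real m * A + real m * real n * B"
      by (rule sum_isp2[OF m])
    show ?thesis
    proof
      show "(INF Q\<in>UNIV. Lm p m Q) = ereal (- (1 / real (m^2)) * (real m * A + real m * real n * B))"
        using R(1) e unfolding A_def B_def by (simp only:) blast
      show "\<forall>Q\<in>unigram_models. ereal (entropy_fn \<pi>) \<le> Lm p m Q" using R(2) by blast
    qed
  qed
  then show "(INF Q\<in>UNIV. Lm p m Q) = ereal (- (1 / real (m^2)) *
      (real m * (\<Sum>a\<in>UNIV. \<pi> a * ln (\<pi> a)) + real m * real n *
        (\<Sum>a\<in>UNIV. \<pi> a * (\<Sum>b\<in>UNIV. P a b * ln (P a b)))))"
    and "\<And>Q. Q \<in> unigram_models \<Longrightarrow> ereal (entropy_fn \<pi>) \<le> Lm p m Q"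
    unfolding A_def B_def by blast+
qed

theorem proposition1:
  fixes P :: "'a::finite \<Rightarrow> 'a \<Rightarrow> real" and \<pi> :: "'a \<Rightarrow> real"
    and p :: "nat \<Rightarrow> 'a list \<Rightarrow> real"
  assumes "ergodic_chain P"
    and "stationary P \<pi>"
    and "p = scen1_prob \<pi> P \<or> p = scen2_prob \<pi> P"
  shows "liminf (\<lambda>m. INF Q\<in>unigram_models. Lm p m Q) \<ge> ereal (entropy_fn \<pi>)
     \<and> ((\<lambda>m. INF Q\<in>UNIV. Lm p m Q) \<longlonglongrightarrow> ereal (entropy_rate \<pi> P))"
proof
  have sto: "stochastic P" using assms(1) by (simp add: ergodic_chain_def)
  define A where "A = (\<Sum>a\<in>UNIV. \<pi> a * ln (\<pi> a))"
  define B where "B = (\<Sum>a\<in>UNIV. \<pi> a * (\<Sum>b\<in>UNIV. P a b * ln (P a b)))"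
  have ev: "eventually (\<lambda>m. 1 \<le> m) sequentially" by (rule eventually_ge_at_top)
  show "liminf (\<lambda>m. INF Q\<in>unigram_models. Lm p m Q) \<ge> ereal (entropy_fn \<pi>)"
  proof (rule Liminf_bounded, rule eventually_mono[OF ev])
    fix m :: nat assume "1 \<le> m"
    then obtain n where m: "m = Suc n" by (cases m) auto
    show "ereal (entropy_fn \<pi>) \<le> (INF Q\<in>unigram_models. Lm p m Q)"
      using scen_main(2)[OF sto assms(2,3) m] by (intro INF_greatest) auto
  qed
  define f where "f m = - B + (B - A) * (1 / real m)" for m :: nat
  have "f \<longlonglongrightarrow> - B + (B - A) * 0"
    unfolding f_def by (intro tendsto_intros)
  then have "(\<lambda>m. ereal (f m)) \<longlonglongrightarrow> ereal (entropy_rate \<pi> P)"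
    by (simp add: entropy_rate_alt B_def)
  moreover have "eventually (\<lambda>m. ereal (f m) = (INF Q\<in>UNIV. Lm p m Q)) sequentially"
  proof (rule eventually_mono[OF ev])
    fix m :: nat assume "1 \<le> m"
    then obtain n where m: "m = Suc n" by (cases m) auto
    have rn: "real n = real m - 1" using m by simp
    have m0: "real m \<noteq> 0" using m by simp
    have "- (1 / real (m^2)) * (real m * A + real m * real n * B) = f m"
      unfolding f_def rn using m0 by (simp add: field_simps power2_eq_square)
    then show "ereal (f m) = (INF Q\<in>UNIV. Lm p m Q)"
      using scen_main(1)[OF sto assms(2,3) m] unfolding A_def B_def by simp
  qed
  ultimately show "(\<lambda>m. INF Q\<in>UNIV. Lm p m Q) \<longlonglongrightarrow> ereal (entropy_rate \<pi> P)"
    by (rule Lim_transform_eventually)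
qed

end
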